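(* Let $\Omega\subset\mathbb{R}^d$ be a bounded domain, $\kappa\in L^\infty(\Omega)$ with $\kappa\ge\kappa_0>0$, and $a(u,v)=\int_\Omega\kappa\nabla u\cdot\nabla v\,dx$, $\|u\|_a^2=a(u,u)$. Let $V_H\subset H^1_0(\Omega)$ be a finite-dimensional space with $V_H=V_{H,1}+V_{H,2}$ for subspaces $V_{H,1},V_{H,2}$. Let $\tau>0$, $N\ge 2$, and let $u_{H,1}^n\in V_{H,1}$, $u_{H,2}^n\in V_{H,2}$ ($n=0,\dots,N$), $u_H^n=u_{H,1}^n+u_{H,2}^n$, satisfy for $n=1,\dots,N-1$: $$(u_H^{n+1}-2u_H^n+u_H^{n-1},w)+\frac{\tau^2}{2}a(u_{H,1}^{n+1}+u_{H,1}^{n-1}+2u_{H,2}^n,w)=0\quad\forall w\in V_{H,1},$$ $$(u_H^{n+1}-2u_H^n+u_H^{n-1},w)+\tau^2a(u_{H,1}^{n}+u_{H,2}^n,w)=0\quad\forall w\in V_{H,2}.$$ Define for $n=0,\dots,N-1$ $$E^{n+\frac12}=\|u_H^{n+1}-u_H^n\|^2+\frac{\tau^2}{2}\sum_{i=1,2}\big(\|u_{H,i}^{n+1}\|_a^2+\|u_{H,i}^n\|_a^2\big)+\tau^2a(u_{H,2}^{n+1},u_{H,1}^n)+\tau^2a(u_{H,1}^{n+1},u_{H,2}^n)-\frac{\tau^2}{2}\|u_{H,2}^{n+1}-u_{H,2}^n\|_a^2.$$ Then $E^{n+\frac12}=E^{n-\frac12}$ for all $n=1,\dots,N-1$.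
   Context: $(\cdot,\cdot)$ and $\|\cdot\|$ denote the $L^2(\Omega)$ inner product and norm. The two equations form the partially explicit (implicit in $V_{H,1}$, explicit in $V_{H,2}$) time discretization of the wave equation $u_{tt}=\nabla\cdot(\kappa\nabla u)$ with homogeneous Dirichlet boundary conditions. *)

theory Defs
  imports "HOL-Analysis.Analysis"
begin

text \<open>Abstract setting: the ambient real inner product space 'v plays the role of
H^1_0(Omega) equipped with the L^2(Omega) inner product (so inner = (.,.), norm = L^2 norm);
the bilinear form a plays the role of a(u,v) = int kappa grad u . grad v.\<close>

definition a_norm_sq :: "('v \<Rightarrow> 'v \<Rightarrow> real) \<Rightarrow> 'v \<Rightarrow> real" where
  "a_norm_sq a u = a u u"

text \<open>energy a tau u1 u2 n is E^{n+1/2}; the coarse solution is u_H^n = u1 n + u2 n.\<close>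
definition energy ::
  "('v::real_inner \<Rightarrow> 'v \<Rightarrow> real) \<Rightarrow> real \<Rightarrow> (nat \<Rightarrow> 'v) \<Rightarrow> (nat \<Rightarrow> 'v) \<Rightarrow> nat \<Rightarrow> real" where
  "energy a tau u1 u2 n =
     (norm ((u1 (Suc n) + u2 (Suc n)) - (u1 n + u2 n)))\<^sup>2
     + tau\<^sup>2 / 2 * ((a_norm_sq a (u1 (Suc n)) + a_norm_sq a (u1 n))
                    + (a_norm_sq a (u2 (Suc n)) + a_norm_sq a (u2 n)))
     + tau\<^sup>2 * a (u2 (Suc n)) (u1 n)
     + tau\<^sup>2 * a (u1 (Suc n)) (u2 n)
     - tau\<^sup>2 / 2 * a_norm_sq a (u2 (Suc n) - u2 n)"

end

theory Submission
  imports Defs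
begin

lemma energy_core:
  fixes a :: "'v::real_inner \<Rightarrow> 'v \<Rightarrow> real"
  assumes bl: "bilinear a" and a_sym: "\<And>u v. a u v = a v u"
    and E1: "inner ((x1 + x2) - 2 *\<^sub>R (y1 + y2) + (z1 + z2)) (x1 - z1)
       + tau\<^sup>2 / 2 * a (x1 + z1 + 2 *\<^sub>R y2) (x1 - z1) = 0"
    and E2: "inner ((x1 + x2) - 2 *\<^sub>R (y1 + y2) + (z1 + z2)) (x2 - z2)
       + tau\<^sup>2 * a (y1 + y2) (x2 - z2) = 0"
  shows "(norm ((x1 + x2) - (y1 + y2)))\<^sup>2
     + tau\<^sup>2 / 2 * ((a x1 x1 + a y1 y1) + (a x2 x2 + a y2 y2))
     + tau\<^sup>2 * a x2 y1 + tau\<^sup>2 * a x1 y2 - tau\<^sup>2 / 2 * a (x2 - y2) (x2 - y2)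
   = (norm ((y1 + y2) - (z1 + z2)))\<^sup>2
     + tau\<^sup>2 / 2 * ((a y1 y1 + a z1 z1) + (a y2 y2 + a z2 z2))
     + tau\<^sup>2 * a y2 z1 + tau\<^sup>2 * a y1 z2 - tau\<^sup>2 / 2 * a (y2 - z2) (y2 - z2)" (is "?L = ?R")
proof -
  have S: "a y1 x1 = a x1 y1" "a z1 x1 = a x1 z1" "a x2 x1 = a x1 x2" "a y2 x1 = a x1 y2" "a z2 x1 = a x1 z2" "a z1 y1 = a y1 z1" "a x2 y1 = a y1 x2" "a y2 y1 = a y1 y2" "a z2 y1 = a y1 z2" "a x2 z1 = a z1 x2" "a y2 z1 = a z1 y2" "a z2 z1 = a z1 z2" "a y2 x2 = a x2 y2" "a z2 x2 = a x2 z2" "a z2 y2 = a y2 z2" "inner y1 x1 = inner x1 y1" "inner z1 x1 = inner x1 z1" "inner x2 x1 = inner x1 x2" "inner y2 x1 = inner x1 y2" "inner z2 x1 = inner x1 z2" "inner z1 y1 = inner y1 z1" "inner x2 y1 = inner y1 x2" "inner y2 y1 = inner y1 y2" "inner z2 y1 = inner y1 z2" "inner x2 z1 = inner z1 x2" "inner y2 z1 = inner z1 y2" "inner z2 z1 = inner z1 z2" "inner y2 x2 = inner x2 y2" "inner z2 x2 = inner x2 z2" "inner z2 y2 = inner y2 z2" using a_sym inner_commute by auto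
  let ?D = "(x1 + x2) - 2 *\<^sub>R (y1 + y2) + (z1 + z2)"
  have key: "?L - ?R = (inner ?D (x1 - z1) + tau\<^sup>2 / 2 * a (x1 + z1 + 2 *\<^sub>R y2) (x1 - z1))
       + (inner ?D (x2 - z2) + tau\<^sup>2 * a (y1 + y2) (x2 - z2))"
    apply (simp add: bilinear_ladd[OF bl] bilinear_radd[OF bl] bilinear_lsub[OF bl] bilinear_rsub[OF bl]
        bilinear_lmul[OF bl] bilinear_rmul[OF bl] inner_add inner_diff power2_norm_eq_inner S algebra_simps)
    by (simp add: field_simps)
  show ?thesis using key E1 E2 by linarith
qed

theorem mainTheorem1:
  fixes a :: "'v::real_inner \<Rightarrow> 'v \<Rightarrow> real"
    and VH1 VH2 :: "'v set"
    and tau :: real and N :: nat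
    and u1 u2 :: "nat \<Rightarrow> 'v"
  assumes a_bilinear: "bilinear a"
    and a_sym: "\<And>u v. a u v = a v u"
    and a_coercive: "\<exists>c>0. \<forall>u. a u u \<ge> c * (norm u)\<^sup>2"
    and sub1: "subspace VH1" and sub2: "subspace VH2"
    and fin: "\<exists>B. finite B \<and> span B = {x + y |x y. x \<in> VH1 \<and> y \<in> VH2}"
    and tau_pos: "tau > 0" and N_ge: "N \<ge> 2"
    and u1_in: "\<And>n. n \<le> N \<Longrightarrow> u1 n \<in> VH1"
    and u2_in: "\<And>n. n \<le> N \<Longrightarrow> u2 n \<in> VH2"
    and eq1: "\<And>n w. 1 \<le> n \<Longrightarrow> n \<le> N - 1 \<Longrightarrow> w \<in> VH1 \<Longrightarrow>
       inner ((u1 (n+1) + u2 (n+1)) - 2 *\<^sub>R (u1 n + u2 n) + (u1 (n-1) + u2 (n-1))) w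
       + tau\<^sup>2 / 2 * a (u1 (n+1) + u1 (n-1) + 2 *\<^sub>R u2 n) w = 0"
    and eq2: "\<And>n w. 1 \<le> n \<Longrightarrow> n \<le> N - 1 \<Longrightarrow> w \<in> VH2 \<Longrightarrow>
       inner ((u1 (n+1) + u2 (n+1)) - 2 *\<^sub>R (u1 n + u2 n) + (u1 (n-1) + u2 (n-1))) w
       + tau\<^sup>2 * a (u1 n + u2 n) w = 0"
  shows "\<forall>n. 1 \<le> n \<and> n \<le> N - 1 \<longrightarrow> energy a tau u1 u2 n = energy a tau u1 u2 (n - 1)"
proof (intro allI impI)
  fix n assume hn: "1 \<le> n \<and> n \<le> N - 1"
  then obtain m where nm: "n = Suc m" by (cases n) auto
  have le: "Suc (Suc m) \<le> N" "Suc m \<le> N" "m \<le> N" using hn nm N_ge by auto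
  have w1: "u1 (Suc (Suc m)) - u1 m \<in> VH1"
    using sub1 u1_in le by (simp add: subspace_diff)
  have w2: "u2 (Suc (Suc m)) - u2 m \<in> VH2"
    using sub2 u2_in le by (simp add: subspace_diff)
  have E1: "inner ((u1 (Suc (Suc m)) + u2 (Suc (Suc m))) - 2 *\<^sub>R (u1 (Suc m) + u2 (Suc m)) + (u1 m + u2 m)) (u1 (Suc (Suc m)) - u1 m)
       + tau\<^sup>2 / 2 * a (u1 (Suc (Suc m)) + u1 m + 2 *\<^sub>R u2 (Suc m)) (u1 (Suc (Suc m)) - u1 m) = 0"
    using eq1[OF _ _ w1, of n] hn nm by simp
  have E2: "inner ((u1 (Suc (Suc m)) + u2 (Suc (Suc m))) - 2 *\<^sub>R (u1 (Suc m) + u2 (Suc m)) + (u1 m + u2 m)) (u2 (Suc (Suc m)) - u2 m)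
       + tau\<^sup>2 * a (u1 (Suc m) + u2 (Suc m)) (u2 (Suc (Suc m)) - u2 m) = 0"
    using eq2[OF _ _ w2, of n] hn nm by simp
  show "energy a tau u1 u2 n = energy a tau u1 u2 (n - 1)"
    using energy_core[OF a_bilinear a_sym E1 E2] unfolding nm energy_def a_norm_sq_def by simp
qed

end
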